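(* Let $(\Delta,\mathcal H)$ be a generic cut with associated simplicial complexes $K_\Delta,K_+,K_-$ on $\widetilde{[m]}=[m]\cup\{o\}$. For $\sigma\subset\widetilde{[m]}$ let $F_\sigma=\bigcap_{i\in\sigma}H_i$, and let $Z=\{\sigma\subset\widetilde{[m]}: F_\sigma\neq\varnothing\text{ and }F_\sigma\subset\Delta_+\setminus H_o\}$. Then $$K_+\cap K_\Delta=\overline Z,\qquad (K_+\cup K_\Delta)\setminus K_-=Z.$$
   Context: Let $\Delta\subset\mathbb R^n$ be an $n$-dimensional simple polytope $\Delta=\{x:\langle x,\lambda_i\rangle+\eta_i\ge0,\ i=1,\dots,m\}$ whose facets $H_i=\Delta\cap\{\langle x,\lambda_i\rangle+\eta_i=0\}$ are all nonempty. A generic cut is a hyperplane $\mathcal H=\{\langle x,\lambda_0\rangle+\xi=0\}$ in general position with the hyperplanes $\{\langle x,\lambda_i\rangle+\eta_i=0\}$ and with $H_o:=\mathcal H\cap\Delta\neq\varnothing$ (so $H_o$ is the facet indexed by $o$). Set $\Delta_\pm=\Delta\cap\{\pm(\langle x,\lambda_0\rangle+\xi)\ge0\}$, $K_\Delta=\{\sigma\subset[m]:\bigcap_{i\in\sigma}H_i\ne\varnothing\}\cup\{\varnothing\}$, $K_\pm=\{\sigma\subset\widetilde{[m]}:\bigcap_{i\in\sigma}(H_i\cap\Delta_\pm)\ne\varnothing\}\cup\{\varnothing\}$. $\overline Z$ denotes the smallest simplicial complex containing $Z$ (all subsets of members of $Z$). *)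

theory Defs
  imports "HOL-Analysis.Analysis"
begin

text \<open>The facet index set is [m] = {1..m}; the extra index o of the cut
  facet is encoded as 0, so the extended index set is {0..m}.\<close>

definition nrm :: "(nat \<Rightarrow> 'a::euclidean_space) \<Rightarrow> 'a \<Rightarrow> nat \<Rightarrow> 'a" where
  "nrm lam lam0 i = (if i = 0 then lam0 else lam i)"

definition ofs :: "(nat \<Rightarrow> real) \<Rightarrow> real \<Rightarrow> nat \<Rightarrow> real" where
  "ofs eta xi i = (if i = 0 then xi else eta i)"

definition hyp :: "(nat \<Rightarrow> 'a::euclidean_space) \<Rightarrow> (nat \<Rightarrow> real) \<Rightarrow> 'a \<Rightarrow> real \<Rightarrow> nat \<Rightarrow> 'a set" where
  "hyp lam eta lam0 xi i = {x. inner x (nrm lam lam0 i) + ofs eta xi i = 0}"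

definition polyt :: "nat \<Rightarrow> (nat \<Rightarrow> 'a::euclidean_space) \<Rightarrow> (nat \<Rightarrow> real) \<Rightarrow> 'a set" where
  "polyt m lam eta = {x. \<forall>i\<in>{1..m}. inner x (lam i) + eta i \<ge> 0}"

definition facet :: "nat \<Rightarrow> (nat \<Rightarrow> 'a::euclidean_space) \<Rightarrow> (nat \<Rightarrow> real) \<Rightarrow> 'a \<Rightarrow> real \<Rightarrow> nat \<Rightarrow> 'a set" where
  "facet m lam eta lam0 xi i = polyt m lam eta \<inter> hyp lam eta lam0 xi i"

definition Dplus :: "nat \<Rightarrow> (nat \<Rightarrow> 'a::euclidean_space) \<Rightarrow> (nat \<Rightarrow> real) \<Rightarrow> 'a \<Rightarrow> real \<Rightarrow> 'a set" where
  "Dplus m lam eta lam0 xi = polyt m lam eta \<inter> {x. inner x lam0 + xi \<ge> 0}"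

definition Dminus :: "nat \<Rightarrow> (nat \<Rightarrow> 'a::euclidean_space) \<Rightarrow> (nat \<Rightarrow> real) \<Rightarrow> 'a \<Rightarrow> real \<Rightarrow> 'a set" where
  "Dminus m lam eta lam0 xi = polyt m lam eta \<inter> {x. - (inner x lam0 + xi) \<ge> 0}"

definition simple_polytope :: "nat \<Rightarrow> (nat \<Rightarrow> 'a::euclidean_space) \<Rightarrow> (nat \<Rightarrow> real) \<Rightarrow> bool" where
  "simple_polytope m lam eta \<longleftrightarrow>
     bounded (polyt m lam eta) \<and> interior (polyt m lam eta) \<noteq> {} \<and>
     (\<forall>i\<in>{1..m}. lam i \<noteq> 0 \<and> polyt m lam eta \<inter> {x. inner x (lam i) + eta i = 0} \<noteq> {}) \<and>
     (\<forall>x\<in>polyt m lam eta.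
        let I = {i\<in>{1..m}. inner x (lam i) + eta i = 0}
        in inj_on lam I \<and> independent (lam ` I))"

definition generic_cut :: "nat \<Rightarrow> (nat \<Rightarrow> 'a::euclidean_space) \<Rightarrow> (nat \<Rightarrow> real) \<Rightarrow> 'a \<Rightarrow> real \<Rightarrow> bool" where
  "generic_cut m lam eta lam0 xi \<longleftrightarrow>
     lam0 \<noteq> 0 \<and> facet m lam eta lam0 xi 0 \<noteq> {} \<and>
     (\<forall>x\<in>polyt m lam eta.
        let I = {i\<in>{0..m}. x \<in> hyp lam eta lam0 xi i}
        in inj_on (nrm lam lam0) I \<and> independent (nrm lam lam0 ` I))"

definition K_Delta :: "nat \<Rightarrow> (nat \<Rightarrow> 'a::euclidean_space) \<Rightarrow> (nat \<Rightarrow> real) \<Rightarrow> 'a \<Rightarrow> real \<Rightarrow> nat set set" where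
  "K_Delta m lam eta lam0 xi =
     {\<sigma>. \<sigma> \<subseteq> {1..m} \<and> (\<Inter>i\<in>\<sigma>. facet m lam eta lam0 xi i) \<noteq> {}} \<union> {{}}"

definition K_plus :: "nat \<Rightarrow> (nat \<Rightarrow> 'a::euclidean_space) \<Rightarrow> (nat \<Rightarrow> real) \<Rightarrow> 'a \<Rightarrow> real \<Rightarrow> nat set set" where
  "K_plus m lam eta lam0 xi =
     {\<sigma>. \<sigma> \<subseteq> {0..m} \<and>
        (\<Inter>i\<in>\<sigma>. facet m lam eta lam0 xi i \<inter> Dplus m lam eta lam0 xi) \<noteq> {}} \<union> {{}}"

definition K_minus :: "nat \<Rightarrow> (nat \<Rightarrow> 'a::euclidean_space) \<Rightarrow> (nat \<Rightarrow> real) \<Rightarrow> 'a \<Rightarrow> real \<Rightarrow> nat set set" where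
  "K_minus m lam eta lam0 xi =
     {\<sigma>. \<sigma> \<subseteq> {0..m} \<and>
        (\<Inter>i\<in>\<sigma>. facet m lam eta lam0 xi i \<inter> Dminus m lam eta lam0 xi) \<noteq> {}} \<union> {{}}"

text \<open>F_sigma, intersected with the polytope (so F_{} = Delta).\<close>
definition Fsig :: "nat \<Rightarrow> (nat \<Rightarrow> 'a::euclidean_space) \<Rightarrow> (nat \<Rightarrow> real) \<Rightarrow> 'a \<Rightarrow> real \<Rightarrow> nat set \<Rightarrow> 'a set" where
  "Fsig m lam eta lam0 xi \<sigma> = polyt m lam eta \<inter> (\<Inter>i\<in>\<sigma>. facet m lam eta lam0 xi i)"

definition Zset :: "nat \<Rightarrow> (nat \<Rightarrow> 'a::euclidean_space) \<Rightarrow> (nat \<Rightarrow> real) \<Rightarrow> 'a \<Rightarrow> real \<Rightarrow> nat set set" where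
  "Zset m lam eta lam0 xi =
     {\<sigma>. \<sigma> \<subseteq> {0..m} \<and> Fsig m lam eta lam0 xi \<sigma> \<noteq> {} \<and>
        Fsig m lam eta lam0 xi \<sigma> \<subseteq> Dplus m lam eta lam0 xi - facet m lam eta lam0 xi 0}"

definition sc_closure :: "'b set set \<Rightarrow> 'b set set" where
  "sc_closure Z = {\<tau>. \<exists>\<sigma>\<in>Z. \<tau> \<subseteq> \<sigma>}"

end

theory Submission
  imports Defs
begin

lemma polyt_closed_convex:
  "closed (polyt m lam eta) \<and> convex (polyt m lam eta)"
proof -
  have e: "polyt m lam eta = (\<Inter>i\<in>{1..m}. {x. inner (lam i) x \<ge> - eta i})"
    by (simp add: polyt_def inner_commute set_eq_iff add.commute) (smt (verit))
  show ?thesis unfolding e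
    by (auto intro!: closed_INT convex_INT closed_halfspace_ge convex_halfspace_ge)
qed

lemma hyp_closed_convex:
  "closed (hyp lam eta lam0 xi i) \<and> convex (hyp lam eta lam0 xi i)"
proof -
  have e: "hyp lam eta lam0 xi i = {x. inner (nrm lam lam0 i) x = - ofs eta xi i}"
    by (auto simp: hyp_def inner_commute)
  show ?thesis unfolding e by (simp add: closed_hyperplane convex_hyperplane)
qed

lemma Fsig_closed_convex:
  "closed (Fsig m lam eta lam0 xi \<sigma>) \<and> convex (Fsig m lam eta lam0 xi \<sigma>)"
proof -
  have "closed (hyp lam eta lam0 xi i)" "convex (hyp lam eta lam0 xi i)" for i
    using hyp_closed_convex by blast+
  moreover have "closed (polyt m lam eta)" "convex (polyt m lam eta)"
    using polyt_closed_convex by blast+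
  ultimately show ?thesis unfolding Fsig_def facet_def
    by (simp add: closed_Int convex_Int closed_INT convex_INT)
qed

lemma hyp_pos: "i \<ge> 1 \<Longrightarrow> x \<in> hyp lam eta lam0 xi i \<longleftrightarrow> inner x (lam i) + eta i = 0"
  by (simp add: hyp_def nrm_def ofs_def)

lemma hyp_zero: "x \<in> hyp lam eta lam0 xi 0 \<longleftrightarrow> inner x lam0 + xi = 0"
  by (simp add: hyp_def nrm_def ofs_def)

lemma open_seg_mid:
  fixes x a :: "'a::euclidean_space"
  assumes "a \<noteq> 0" "e > 0"
  shows "x \<in> open_segment (x - e *\<^sub>R a) (x + e *\<^sub>R a)"
proof -
  have "x = (1 - 1/2) *\<^sub>R (x - e *\<^sub>R a) + (1/2) *\<^sub>R (x + e *\<^sub>R a)"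
    by (simp add: algebra_simps scaleR_2[symmetric])
  hence "x \<in> closed_segment (x - e *\<^sub>R a) (x + e *\<^sub>R a)"
    unfolding in_segment by (metis less_eq_real_def field_sum_of_halves le_add_same_cancel1 zero_less_divide_1_iff zero_less_numeral)
  moreover have "x \<noteq> x - e *\<^sub>R a" "x \<noteq> x + e *\<^sub>R a" using assms by auto
  ultimately show ?thesis by (simp add: open_segment_def)
qed

lemma keyA:
  fixes m :: nat and lam :: "nat \<Rightarrow> 'a::euclidean_space" and eta :: "nat \<Rightarrow> real"
    and lam0 :: 'a and xi :: real
  assumes sp: "simple_polytope m lam eta"
    and gc: "generic_cut m lam eta lam0 xi"
    and sig: "\<sigma> \<subseteq> {1..m}"
    and ne: "Fsig m lam eta lam0 xi \<sigma> \<inter> Dplus m lam eta lam0 xi \<noteq> {}"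
  shows "\<exists>\<rho>. \<sigma> \<subseteq> \<rho> \<and> \<rho> \<subseteq> {1..m} \<and> \<rho> \<in> Zset m lam eta lam0 xi"
proof -
  define P where "P = polyt m lam eta"
  define F where "F = Fsig m lam eta lam0 xi \<sigma>"
  define g where "g = (\<lambda>x::'a. inner x lam0 + xi)"
  have Fsub: "F \<subseteq> P" by (auto simp: F_def Fsig_def P_def)
  have bP: "bounded P" using sp by (simp add: simple_polytope_def P_def)
  have cF: "compact F" using Fsig_closed_convex[of m lam eta lam0 xi \<sigma>] Fsub bP
    by (simp add: F_def compact_eq_bounded_closed bounded_subset)
  have cvF: "convex F" using Fsig_closed_convex[of m lam eta lam0 xi \<sigma>] by (simp add: F_def)
  have Fne: "F \<noteq> {}" using ne by (auto simp: F_def)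
  have contg: "continuous_on F g" unfolding g_def by (intro continuous_intros)
  obtain z where zF: "z \<in> F" and zmax: "\<And>y. y \<in> F \<Longrightarrow> g y \<le> g z"
    using continuous_attains_sup[OF cF Fne contg] by blast
  define M where "M = g z"
  have M0: "M \<ge> 0"
  proof -
    obtain w where "w \<in> F" "w \<in> Dplus m lam eta lam0 xi" using ne F_def by blast
    hence "g w \<ge> 0" by (simp add: Dplus_def g_def)
    with zmax[OF \<open>w \<in> F\<close>] show ?thesis by (simp add: M_def)
  qed
  define S where "S = F \<inter> {x. g x = M}"
  have "closed {x. g x = M}" unfolding g_def
    by (intro closed_Collect_eq continuous_intros)
  hence cS: "compact S" using cF by (simp add: S_def compact_Int_closed)
  have "convex {x. g x = M}"
  proof -
    have "{x. g x = M} = {x. inner lam0 x = M - xi}" by (auto simp: g_def inner_commute)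
    thus ?thesis by (simp add: convex_hyperplane)
  qed
  hence cvS: "convex S" using cvF by (simp add: S_def convex_Int)
  have Sne: "S \<noteq> {}" using zF by (auto simp: S_def M_def)
  obtain x where xe: "x extreme_point_of S"
    using extreme_point_exists_convex[OF cS cvS Sne] by blast
  have xS: "x \<in> S" using xe by (simp add: extreme_point_of_def)
  hence xF: "x \<in> F" and gx: "g x = M" by (auto simp: S_def)
  hence xP: "x \<in> P" using Fsub by blast
  define I where "I = {i\<in>{1..m}. inner x (lam i) + eta i = 0}"
  have sigI: "\<sigma> \<subseteq> I"
  proof
    fix i assume "i \<in> \<sigma>"
    hence "x \<in> hyp lam eta lam0 xi i" "i \<ge> 1" "i \<in> {1..m}" using xF sig
      by (auto simp: F_def Fsig_def facet_def split: if_splits)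
    thus "i \<in> I" by (simp add: I_def hyp_pos)
  qed
  have spanU: "span (lam ` I) = UNIV"
  proof (rule ccontr)
    assume "span (lam ` I) \<noteq> UNIV"
    then obtain a :: 'a where a0: "a \<noteq> 0" and aort: "\<And>v. v \<in> span (lam ` I) \<Longrightarrow> a \<bullet> v = 0"
      using span_not_UNIV_orthogonal by blast
    have aI: "a \<bullet> lam i = 0" if "i \<in> I" for i using aort that by (simp add: span_base)
    define J where "J = {1..m} - I"
    define s where "s = (\<lambda>i. inner x (lam i) + eta i)"
    have spos: "s i > 0" if "i \<in> J" for i
    proof -
      have "s i \<ge> 0" using xP that by (auto simp: P_def polyt_def J_def s_def)
      moreover have "s i \<noteq> 0" using that by (auto simp: J_def I_def s_def)
      ultimately show ?thesis by simp
    qed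
    define e where "e = Min (insert 1 ((\<lambda>i. s i / (\<bar>a \<bullet> lam i\<bar> + 1)) ` J))"
    have finJ: "finite J" by (simp add: J_def)
    have epos: "e > 0" unfolding e_def using finJ spos
      by (subst Min_gr_iff) (auto intro!: divide_pos_pos)
    have ele: "e * \<bar>a \<bullet> lam i\<bar> < s i" if "i \<in> J" for i
    proof -
      have "e \<le> s i / (\<bar>a \<bullet> lam i\<bar> + 1)" unfolding e_def using finJ that by (intro Min_le) auto
      hence "e * (\<bar>a \<bullet> lam i\<bar> + 1) \<le> s i" by (simp add: pos_le_divide_eq add_pos_nonneg)
      thus ?thesis using epos by (simp add: algebra_simps)
    qed
    have yF: "x + c *\<^sub>R (e *\<^sub>R a) \<in> F" if c: "c = 1 \<or> c = -1" for c
    proof -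
      let ?y = "x + c *\<^sub>R (e *\<^sub>R a)"
      have val: "inner ?y (lam i) + eta i = s i + c * e * (a \<bullet> lam i)" for i
        by (simp add: s_def inner_add_left algebra_simps)
      have "\<bar>c * e * (a \<bullet> lam i)\<bar> = e * \<bar>a \<bullet> lam i\<bar>" for i
        using c epos by (auto simp: abs_mult)
      hence "inner ?y (lam i) + eta i \<ge> 0" if "i \<in> {1..m}" for i
      proof (cases "i \<in> I")
        case True thus ?thesis using aI[OF True] val[of i] I_def s_def by simp
      next
        case False
        hence "i \<in> J" using that by (simp add: J_def)
        thus ?thesis using ele[of i] val[of i] \<open>\<And>i. \<bar>c * e * (a \<bullet> lam i)\<bar> = e * \<bar>a \<bullet> lam i\<bar>\<close>[of i]
          by (smt (verit, best) abs_le_iff)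
      qed
      hence yP: "?y \<in> P" by (simp add: P_def polyt_def)
      have "?y \<in> hyp lam eta lam0 xi i" if "i \<in> \<sigma>" for i
      proof -
        have iI: "i \<in> I" using sigI that by blast
        hence "i \<ge> 1" by (simp add: I_def)
        thus ?thesis using val[of i] aI[OF iI] iI by (simp add: hyp_pos I_def s_def)
      qed
      with yP show ?thesis by (auto simp: F_def Fsig_def facet_def P_def)
    qed
    have gy: "g (x + c *\<^sub>R (e *\<^sub>R a)) = M + c * e * (a \<bullet> lam0)" for c
      using gx by (simp add: g_def inner_add_left algebra_simps)
    have "M + 1 * e * (a \<bullet> lam0) \<le> M" using zmax[OF yF[of 1]] gy[of 1] by (simp add: M_def)
    moreover have "M + (-1) * e * (a \<bullet> lam0) \<le> M" using zmax[OF yF[of "-1"]] gy[of "-1"] by (simp add: M_def)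
    ultimately have "e * (a \<bullet> lam0) = 0" by simp
    hence yS: "x + c *\<^sub>R (e *\<^sub>R a) \<in> S" if "c = 1 \<or> c = -1" for c
      using yF[OF that] gy[of c] by (simp add: S_def)
    have "x \<in> open_segment (x - e *\<^sub>R a) (x + e *\<^sub>R a)" using open_seg_mid[OF a0 epos] .
    moreover have "x - e *\<^sub>R a \<in> S" using yS[of "-1"] by simp
    moreover have "x + e *\<^sub>R a \<in> S" using yS[of 1] by simp
    ultimately show False using xe by (auto simp: extreme_point_of_def)
  qed
  have FI: "Fsig m lam eta lam0 xi I \<subseteq> {x}"
  proof
    fix y assume yI: "y \<in> Fsig m lam eta lam0 xi I"
    have "(y - x) \<bullet> lam i = 0" if "i \<in> I" for i
    proof -
      have "y \<in> hyp lam eta lam0 xi i" "i \<ge> 1" using yI that by (auto simp: Fsig_def facet_def I_def split: if_splits)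
      hence "inner y (lam i) + eta i = 0" by (simp add: hyp_pos)
      moreover have "inner x (lam i) + eta i = 0" using that by (simp add: I_def)
      ultimately show ?thesis by (simp add: inner_diff_left)
    qed
    hence "lam ` I \<subseteq> {v. (y - x) \<bullet> v = 0}" by auto
    hence "span (lam ` I) \<subseteq> {v. (y - x) \<bullet> v = 0}" by (rule span_minimal[OF _ subspace_hyperplane])
    hence "(y - x) \<bullet> (y - x) = 0" using spanU by blast
    thus "y \<in> {x}" by simp
  qed
  have xFI: "x \<in> Fsig m lam eta lam0 xi I"
    using xP by (auto simp: Fsig_def facet_def P_def I_def hyp_pos split: if_splits)
  have Mpos: "M > 0"
  proof (rule ccontr)
    assume "\<not> M > 0"
    hence "g x = 0" using M0 gx by simp
    hence x0: "x \<in> hyp lam eta lam0 xi 0" by (simp add: hyp_zero g_def)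
    define K where "K = {i\<in>{0..m}. x \<in> hyp lam eta lam0 xi i}"
    have gen: "inj_on (nrm lam lam0) K" "independent (nrm lam lam0 ` K)"
      using gc xP by (auto simp: generic_cut_def P_def K_def Let_def)
    have IK: "I \<subseteq> K" by (auto simp: I_def K_def hyp_pos)
    have K0: "0 \<in> K" using x0 by (simp add: K_def)
    have "lam ` I \<subseteq> nrm lam lam0 ` K - {lam0}"
    proof
      fix v assume "v \<in> lam ` I"
      then obtain i where i: "i \<in> I" "v = lam i" by blast
      hence i1: "i \<ge> 1" by (simp add: I_def)
      hence "nrm lam lam0 i = lam i" by (simp add: nrm_def)
      moreover have "nrm lam lam0 i \<noteq> nrm lam lam0 0"
        using gen(1) IK i K0 i1 by (metis inj_on_contraD not_one_le_zero subsetD)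
      ultimately show "v \<in> nrm lam lam0 ` K - {lam0}" using i IK by (force simp: nrm_def)
    qed
    hence "lam0 \<in> span (nrm lam lam0 ` K - {lam0})" using spanU span_mono by blast
    moreover have "lam0 \<in> nrm lam lam0 ` K" using K0 by (force simp: nrm_def)
    ultimately have "dependent (nrm lam lam0 ` K)" unfolding dependent_def by blast
    with gen(2) show False by simp
  qed
  have "I \<in> Zset m lam eta lam0 xi"
  proof -
    have "Fsig m lam eta lam0 xi I = {x}" using FI xFI by blast
    moreover have "x \<in> Dplus m lam eta lam0 xi" using xP Mpos gx by (simp add: Dplus_def P_def g_def)
    moreover have "x \<notin> facet m lam eta lam0 xi 0" using Mpos gx by (simp add: facet_def hyp_zero g_def)
    moreover have "I \<subseteq> {0..m}" by (auto simp: I_def)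
    ultimately show ?thesis by (simp add: Zset_def)
  qed
  moreover have "I \<subseteq> {1..m}" by (auto simp: I_def)
  ultimately show ?thesis using sigI by blast
qed

lemma Fsig_mem: "x \<in> Fsig m lam eta lam0 xi \<sigma> \<longleftrightarrow> x \<in> polyt m lam eta \<and> (\<forall>i\<in>\<sigma>. x \<in> hyp lam eta lam0 xi i)"
  unfolding Fsig_def facet_def by blast

lemma INT_fac: "\<sigma> \<noteq> {} \<Longrightarrow> (\<Inter>i\<in>\<sigma>. facet m lam eta lam0 xi i \<inter> D) = Fsig m lam eta lam0 xi \<sigma> \<inter> D"
  unfolding Fsig_def facet_def by blast

lemma INT_fac2: "\<sigma> \<noteq> {} \<Longrightarrow> (\<Inter>i\<in>\<sigma>. facet m lam eta lam0 xi i) = Fsig m lam eta lam0 xi \<sigma>"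
  unfolding Fsig_def facet_def by blast

lemma Kp_mem: "\<sigma> \<noteq> {} \<Longrightarrow> \<sigma> \<in> K_plus m lam eta lam0 xi \<longleftrightarrow>
   \<sigma> \<subseteq> {0..m} \<and> (\<exists>x. x \<in> Fsig m lam eta lam0 xi \<sigma> \<and> x \<in> Dplus m lam eta lam0 xi)"
proof -
  assume ne: "\<sigma> \<noteq> {}"
  have "\<sigma> \<in> K_plus m lam eta lam0 xi \<longleftrightarrow> \<sigma> \<subseteq> {0..m} \<and>
     (\<Inter>i\<in>\<sigma>. facet m lam eta lam0 xi i \<inter> Dplus m lam eta lam0 xi) \<noteq> {}"
    using ne unfolding K_plus_def by simp
  also have "\<dots> \<longleftrightarrow> \<sigma> \<subseteq> {0..m} \<and> Fsig m lam eta lam0 xi \<sigma> \<inter> Dplus m lam eta lam0 xi \<noteq> {}"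
    by (simp only: INT_fac[OF ne])
  also have "\<dots> \<longleftrightarrow> \<sigma> \<subseteq> {0..m} \<and> (\<exists>x. x \<in> Fsig m lam eta lam0 xi \<sigma> \<and> x \<in> Dplus m lam eta lam0 xi)"
    by blast
  finally show ?thesis .
qed
lemma Km_mem: "\<sigma> \<noteq> {} \<Longrightarrow> \<sigma> \<in> K_minus m lam eta lam0 xi \<longleftrightarrow>
   \<sigma> \<subseteq> {0..m} \<and> (\<exists>x. x \<in> Fsig m lam eta lam0 xi \<sigma> \<and> x \<in> Dminus m lam eta lam0 xi)"
proof -
  assume ne: "\<sigma> \<noteq> {}"
  have "\<sigma> \<in> K_minus m lam eta lam0 xi \<longleftrightarrow> \<sigma> \<subseteq> {0..m} \<and>
     (\<Inter>i\<in>\<sigma>. facet m lam eta lam0 xi i \<inter> Dminus m lam eta lam0 xi) \<noteq> {}"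
    using ne unfolding K_minus_def by simp
  also have "\<dots> \<longleftrightarrow> \<sigma> \<subseteq> {0..m} \<and> Fsig m lam eta lam0 xi \<sigma> \<inter> Dminus m lam eta lam0 xi \<noteq> {}"
    by (simp only: INT_fac[OF ne])
  also have "\<dots> \<longleftrightarrow> \<sigma> \<subseteq> {0..m} \<and> (\<exists>x. x \<in> Fsig m lam eta lam0 xi \<sigma> \<and> x \<in> Dminus m lam eta lam0 xi)"
    by blast
  finally show ?thesis .
qed
lemma KD_mem: "\<sigma> \<noteq> {} \<Longrightarrow> \<sigma> \<in> K_Delta m lam eta lam0 xi \<longleftrightarrow>
   \<sigma> \<subseteq> {1..m} \<and> (\<exists>x. x \<in> Fsig m lam eta lam0 xi \<sigma>)"
proof -
  assume ne: "\<sigma> \<noteq> {}"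
  have "\<sigma> \<in> K_Delta m lam eta lam0 xi \<longleftrightarrow> \<sigma> \<subseteq> {1..m} \<and>
     (\<Inter>i\<in>\<sigma>. facet m lam eta lam0 xi i) \<noteq> {}"
    using ne unfolding K_Delta_def by simp
  also have "\<dots> \<longleftrightarrow> \<sigma> \<subseteq> {1..m} \<and> Fsig m lam eta lam0 xi \<sigma> \<noteq> {}"
    by (simp only: INT_fac2[OF ne])
  also have "\<dots> \<longleftrightarrow> \<sigma> \<subseteq> {1..m} \<and> (\<exists>x. x \<in> Fsig m lam eta lam0 xi \<sigma>)"
    by blast
  finally show ?thesis .
qed

lemma Z_mem: "\<sigma> \<in> Zset m lam eta lam0 xi \<longleftrightarrow> \<sigma> \<subseteq> {0..m} \<and> (\<exists>x. x \<in> Fsig m lam eta lam0 xi \<sigma>) \<and>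
   (\<forall>x\<in>Fsig m lam eta lam0 xi \<sigma>. inner x lam0 + xi > 0)"
proof -
  have "x \<in> Dplus m lam eta lam0 xi - facet m lam eta lam0 xi 0 \<longleftrightarrow> inner x lam0 + xi > 0"
    if "x \<in> Fsig m lam eta lam0 xi \<sigma>" for x
    using that by (auto simp: Fsig_mem Dplus_def facet_def hyp_zero)
  thus ?thesis unfolding Zset_def by blast
qed

lemma Z_not0:
  fixes \<sigma> :: "nat set"
  assumes H0: "facet m lam eta lam0 xi 0 \<noteq> {}" and Z: "\<sigma> \<in> Zset m lam eta lam0 xi"
  shows "0 \<notin> \<sigma> \<and> \<sigma> \<noteq> {} \<and> \<sigma> \<subseteq> {1..m}"
proof -
  have x: "Fsig m lam eta lam0 xi \<sigma> \<noteq> {}" and pos: "\<forall>x\<in>Fsig m lam eta lam0 xi \<sigma>. inner x lam0 + xi > 0"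
    and sub: "\<sigma> \<subseteq> {0..m}"
    using Z unfolding Z_mem by blast+
  then obtain x where x: "x \<in> Fsig m lam eta lam0 xi \<sigma>" by blast
  have n0: "0 \<notin> \<sigma>"
  proof
    assume "0 \<in> \<sigma>"
    hence "x \<in> hyp lam eta lam0 xi 0" using x by (simp add: Fsig_mem)
    hence "inner x lam0 + xi = 0" by (simp add: hyp_zero)
    moreover have "inner x lam0 + xi > 0" using pos x by blast
    ultimately show False by simp
  qed
  have ne: "\<sigma> \<noteq> {}"
  proof
    assume "\<sigma> = {}"
    hence FP: "Fsig m lam eta lam0 xi \<sigma> = polyt m lam eta" by (simp add: Fsig_def)
    obtain w where w: "w \<in> facet m lam eta lam0 xi 0" using H0 by blast
    have "facet m lam eta lam0 xi 0 \<subseteq> polyt m lam eta" by (simp add: facet_def)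
    hence wF: "w \<in> Fsig m lam eta lam0 xi \<sigma>" using w FP by blast
    have "Fsig m lam eta lam0 xi \<sigma> \<subseteq> Dplus m lam eta lam0 xi - facet m lam eta lam0 xi 0"
      using Z by (simp add: Zset_def)
    hence "w \<notin> facet m lam eta lam0 xi 0" using wF by blast
    thus False using w by blast
  qed
  have s1: "\<sigma> \<subseteq> {1..m}"
  proof
    fix i assume i: "i \<in> \<sigma>"
    hence "i \<le> m" using sub by auto
    moreover have "i \<noteq> 0" using i n0 by metis
    ultimately show "i \<in> {1..m}" by simp
  qed
  show ?thesis using n0 ne s1 by blast
qed

lemma C1:
  fixes m :: nat and lam :: "nat \<Rightarrow> 'a::euclidean_space" and eta :: "nat \<Rightarrow> real"
    and lam0 :: 'a and xi :: real
  assumes "simple_polytope m lam eta"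
    and "generic_cut m lam eta lam0 xi"
  shows "K_plus m lam eta lam0 xi \<inter> K_Delta m lam eta lam0 xi = sc_closure (Zset m lam eta lam0 xi)"
proof -
  let ?F = "Fsig m lam eta lam0 xi"
  have H0: "facet m lam eta lam0 xi 0 \<noteq> {}" using assms(2) by (simp add: generic_cut_def)
  have e0: "{} \<in> K_plus m lam eta lam0 xi" "{} \<in> K_Delta m lam eta lam0 xi" "{} \<in> K_minus m lam eta lam0 xi"
    by (simp_all add: K_plus_def K_Delta_def K_minus_def)
  show ?thesis
  proof (intro set_eqI iffI)
    fix \<sigma> assume s: "\<sigma> \<in> K_plus m lam eta lam0 xi \<inter> K_Delta m lam eta lam0 xi"
    show "\<sigma> \<in> sc_closure (Zset m lam eta lam0 xi)"
    proof (cases "\<sigma> = {}")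
      case True
      obtain w where "w \<in> facet m lam eta lam0 xi 0" using H0 by blast
      hence "w \<in> polyt m lam eta" "inner w lam0 + xi = 0" by (simp_all add: facet_def hyp_zero)
      hence "w \<in> ?F {} \<inter> Dplus m lam eta lam0 xi"
        by (simp add: Fsig_def Dplus_def)
      hence ne0: "?F {} \<inter> Dplus m lam eta lam0 xi \<noteq> {}" by blast
      have "\<exists>\<rho>. {} \<subseteq> \<rho> \<and> \<rho> \<subseteq> {1..m} \<and> \<rho> \<in> Zset m lam eta lam0 xi"
        by (rule keyA[OF assms empty_subsetI ne0])
      then obtain \<rho> where "\<rho> \<in> Zset m lam eta lam0 xi" by blast
      thus ?thesis using True unfolding sc_closure_def by blast
    next
      case False
      then obtain x where "x \<in> ?F \<sigma>" "x \<in> Dplus m lam eta lam0 xi" "\<sigma> \<subseteq> {1..m}"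
        using s Kp_mem[OF False, of m lam eta lam0 xi] KD_mem[OF False, of m lam eta lam0 xi] by blast
      hence ne1: "?F \<sigma> \<inter> Dplus m lam eta lam0 xi \<noteq> {}" and s1: "\<sigma> \<subseteq> {1..m}" by blast+
      have "\<exists>\<rho>. \<sigma> \<subseteq> \<rho> \<and> \<rho> \<subseteq> {1..m} \<and> \<rho> \<in> Zset m lam eta lam0 xi"
        by (rule keyA[OF assms s1 ne1])
      then obtain \<rho> where "\<sigma> \<subseteq> \<rho>" "\<rho> \<in> Zset m lam eta lam0 xi" by blast
      thus ?thesis unfolding sc_closure_def by blast
    qed
  next
    fix \<tau> assume "\<tau> \<in> sc_closure (Zset m lam eta lam0 xi)"
    then obtain \<rho> where tr: "\<tau> \<subseteq> \<rho>" and Z: "\<rho> \<in> Zset m lam eta lam0 xi"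
      unfolding sc_closure_def by blast
    show "\<tau> \<in> K_plus m lam eta lam0 xi \<inter> K_Delta m lam eta lam0 xi"
    proof (cases "\<tau> = {}")
      case True thus ?thesis using e0 by simp
    next
      case False
      from Z obtain x where x: "x \<in> ?F \<rho>" and pos: "\<forall>x\<in>?F \<rho>. inner x lam0 + xi > 0"
        by (auto simp: Z_mem)
      have r1: "\<rho> \<subseteq> {1..m}" using Z_not0[OF H0 Z] by blast
      have "x \<in> ?F \<tau>" using x tr unfolding Fsig_mem by blast
      moreover have "x \<in> Dplus m lam eta lam0 xi"
      proof -
        have "inner x lam0 + xi > 0" using x pos by blast
        thus ?thesis using x by (simp add: Dplus_def Fsig_mem)
      qed
      moreover have t1: "\<tau> \<subseteq> {1..m}" using tr r1 by blast
      moreover have "\<tau> \<subseteq> {0..m}" using t1 by auto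
      ultimately show ?thesis
        using Kp_mem[OF False, of m lam eta lam0 xi] KD_mem[OF False, of m lam eta lam0 xi] by blast
    qed
  qed
qed

lemma C2:
  fixes m :: nat and lam :: "nat \<Rightarrow> 'a::euclidean_space" and eta :: "nat \<Rightarrow> real"
    and lam0 :: 'a and xi :: real
  assumes "simple_polytope m lam eta"
    and "generic_cut m lam eta lam0 xi"
  shows "(K_plus m lam eta lam0 xi \<union> K_Delta m lam eta lam0 xi) - K_minus m lam eta lam0 xi
           = Zset m lam eta lam0 xi"
proof -
  let ?F = "Fsig m lam eta lam0 xi"
  have H0: "facet m lam eta lam0 xi 0 \<noteq> {}" using assms(2) by (simp add: generic_cut_def)
  have e0: "{} \<in> K_plus m lam eta lam0 xi" "{} \<in> K_Delta m lam eta lam0 xi" "{} \<in> K_minus m lam eta lam0 xi"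
    by (simp_all add: K_plus_def K_Delta_def K_minus_def)
  show ?thesis
  proof (intro set_eqI iffI)
    fix \<sigma> assume s: "\<sigma> \<in> (K_plus m lam eta lam0 xi \<union> K_Delta m lam eta lam0 xi) - K_minus m lam eta lam0 xi"
    have "{} \<in> K_minus m lam eta lam0 xi" by (simp add: K_minus_def)
    hence ne: "\<sigma> \<noteq> {}" using s by blast
    have nK: "\<sigma> \<notin> K_minus m lam eta lam0 xi" using s by blast
    have "\<sigma> \<in> K_plus m lam eta lam0 xi \<or> \<sigma> \<in> K_Delta m lam eta lam0 xi" using s by blast
    hence sub: "\<sigma> \<subseteq> {0..m}"
      using Kp_mem[OF ne, of m lam eta lam0 xi] KD_mem[OF ne, of m lam eta lam0 xi] by auto
    have nm: "\<not> (\<exists>x. x \<in> ?F \<sigma> \<and> x \<in> Dminus m lam eta lam0 xi)"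
      using nK sub Km_mem[OF ne, of m lam eta lam0 xi] by blast

    have ex: "\<exists>x. x \<in> ?F \<sigma>"
      using \<open>\<sigma> \<in> K_plus m lam eta lam0 xi \<or> \<sigma> \<in> K_Delta m lam eta lam0 xi\<close>
        Kp_mem[OF ne, of m lam eta lam0 xi] KD_mem[OF ne, of m lam eta lam0 xi] by blast
    have "\<forall>x\<in>?F \<sigma>. inner x lam0 + xi > 0"
    proof
      fix x assume x: "x \<in> ?F \<sigma>"
      hence "x \<in> polyt m lam eta" by (simp add: Fsig_mem)
      hence "x \<notin> Dminus m lam eta lam0 xi" using nm x by blast
      thus "inner x lam0 + xi > 0" using \<open>x \<in> polyt m lam eta\<close> by (simp add: Dminus_def)
    qed
    thus "\<sigma> \<in> Zset m lam eta lam0 xi" using ex sub by (simp add: Z_mem)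
  next
    fix \<sigma> assume Z: "\<sigma> \<in> Zset m lam eta lam0 xi"
    have ne: "\<sigma> \<noteq> {}" and s1: "\<sigma> \<subseteq> {1..m}" using Z_not0[OF H0 Z] by auto
    from Z have ex: "\<exists>x. x \<in> ?F \<sigma>" and pos: "\<forall>x\<in>?F \<sigma>. inner x lam0 + xi > 0"
      by (auto simp: Z_mem)
    have "\<sigma> \<in> K_Delta m lam eta lam0 xi" using ex s1 by (simp add: KD_mem[OF ne, of m lam eta lam0 xi])
    moreover have "\<sigma> \<notin> K_minus m lam eta lam0 xi"
    proof
      assume "\<sigma> \<in> K_minus m lam eta lam0 xi"
      then obtain x where x: "x \<in> ?F \<sigma>" "x \<in> Dminus m lam eta lam0 xi"
        by (auto simp: Km_mem[OF ne, of m lam eta lam0 xi])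
      have "inner x lam0 + xi > 0" using pos x(1) by blast
      thus False using x(2) by (simp add: Dminus_def)
    qed
    ultimately show "\<sigma> \<in> (K_plus m lam eta lam0 xi \<union> K_Delta m lam eta lam0 xi) - K_minus m lam eta lam0 xi"
      by blast
  qed
qed

theorem lemma3p10:
  fixes m :: nat and lam :: "nat \<Rightarrow> 'a::euclidean_space" and eta :: "nat \<Rightarrow> real"
    and lam0 :: 'a and xi :: real
  assumes "simple_polytope m lam eta"
    and "generic_cut m lam eta lam0 xi"
  shows "K_plus m lam eta lam0 xi \<inter> K_Delta m lam eta lam0 xi = sc_closure (Zset m lam eta lam0 xi)
    \<and> (K_plus m lam eta lam0 xi \<union> K_Delta m lam eta lam0 xi) - K_minus m lam eta lam0 xi
           = Zset m lam eta lam0 xi"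
  using C1[OF assms] C2[OF assms] by (rule conjI)

end
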